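(* In the standing setup, let $B=\alpha I+\beta A+\gamma A^2$ ($\alpha,\beta,\gamma\in\mathbb R$) satisfy $B^2=I$, and let $g(x)=B^{\rm T}f_0(x)$ be the associated vector field. Then for all $x\in\mathbb R^6$: $g'(x)g(x)=f_0'(x)f_0(x)$ and $(g'(x))^2=(f_0'(x))^2$.
   Context: Standing setup: $J=\begin{pmatrix}0&I_3\\-I_3&0\end{pmatrix}$ ($6\times6$). $A$ is a fixed real $6\times 6$ skew-Hamiltonian matrix, i.e. $A^{\rm T}J=JA$. $\nabla H$ denotes the gradient and $\nabla^2H$ the Hesse matrix. $H_0$ is a homogeneous cubic polynomial on $\mathbb R^6$ with $A\nabla^2H_0(x)=\nabla^2H_0(x)A^{\rm T}$ for all $x$, and $H_1,H_2$ are homogeneous cubic polynomials with $\nabla H_1=A\nabla H_0$, $\nabla H_2=A\nabla H_1$. Set $f_i=J\nabla H_i$; primes denote Jacobi matrices. Associated vector field: if $B=\alpha I+\beta A+\gamma A^2$ satisfies $B^2=I$, then $g(x)=JB\nabla H_0(x)=B^{\rm T}f_0(x)$ is called associated to $f_0$; it equals $J\nabla K$ with $K=\alpha H_0+\beta H_1+\gamma H_2$. *)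

theory Defs
  imports "HOL-Analysis.Analysis"
begin

type_synonym vec6 = "real ^ 6"
type_synonym mat6 = "real ^ 6 ^ 6"

text \<open>The symplectic matrix J = [[0, I3], [-I3, 0]]; indices of type 6 are 1,2,3,4,5,6 (= 0).\<close>
definition Jmat :: mat6 where
  "Jmat = (\<chi> i j. if i \<in> {1,2,3} \<and> j = i + 3 then 1
                  else if j \<in> {1,2,3} \<and> i = j + 3 then -1 else (0::real))"

definition hom_cubic :: "(vec6 \<Rightarrow> real) \<Rightarrow> bool" where
  "hom_cubic H \<longleftrightarrow> (\<exists>c :: 6 \<Rightarrow> 6 \<Rightarrow> 6 \<Rightarrow> real.
      \<forall>x. H x = (\<Sum>i\<in>UNIV. \<Sum>j\<in>UNIV. \<Sum>k\<in>UNIV. c i j k * x$i * x$j * x$k))"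

definition grad :: "(vec6 \<Rightarrow> real) \<Rightarrow> vec6 \<Rightarrow> vec6" where
  "grad H x = (\<chi> i. frechet_derivative H (at x) (axis i 1))"

definition hess :: "(vec6 \<Rightarrow> real) \<Rightarrow> vec6 \<Rightarrow> mat6" where
  "hess H x = jacobian (grad H) (at x)"

end

theory Submission
  imports Defs
begin

declare transpose_matrix_vector[simp del]

lemma vn: "((\<lambda>x::vec6. x$i) has_derivative (\<lambda>v. v$i)) F"
  by (rule bounded_linear_imp_has_derivative[OF bounded_linear_vec_nth])
lemma cubic_deriv:
  fixes c :: "6 \<Rightarrow> 6 \<Rightarrow> 6 \<Rightarrow> real"
  shows "((\<lambda>x::vec6. \<Sum>i\<in>UNIV. \<Sum>j\<in>UNIV. \<Sum>k\<in>UNIV. c i j k * x$i * x$j * x$k) has_derivative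
     (\<lambda>v. \<Sum>i\<in>UNIV. \<Sum>j\<in>UNIV. \<Sum>k\<in>UNIV. c i j k * (v$i * y$j * y$k + y$i * v$j * y$k + y$i * y$j * v$k))) (at y)"
  apply (rule vn | rule refl | rule derivative_eq_intros)+
  apply (rule ext)
  apply (simp add: algebra_simps sum.distrib)
  done

lemma grad_diff:
  assumes "hom_cubic H"
  shows "grad H differentiable at x"
proof -
  obtain c where c: "\<forall>x. H x = (\<Sum>i\<in>UNIV. \<Sum>j\<in>UNIV. \<Sum>k\<in>UNIV. c i j k * x$i * x$j * x$k)"
    using assms unfolding hom_cubic_def by blast
  have Hc: "H = (\<lambda>x. \<Sum>i\<in>UNIV. \<Sum>j\<in>UNIV. \<Sum>k\<in>UNIV. c i j k * x$i * x$j * x$k)" using c by auto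
  define q where "q l y = (\<Sum>i\<in>UNIV. \<Sum>j\<in>UNIV. \<Sum>k\<in>UNIV. c i j k *
     ((axis l 1::vec6)$i * y$j * y$k + y$i * (axis l 1::vec6)$j * y$k + y$i * y$j * (axis l 1::vec6)$k))" for l and y :: vec6
  have g: "grad H y = (\<Sum>l\<in>UNIV. q l y *\<^sub>R axis l 1)" for y
  proof -
    have "frechet_derivative H (at y) = (\<lambda>v. \<Sum>i\<in>UNIV. \<Sum>j\<in>UNIV. \<Sum>k\<in>UNIV. c i j k * (v$i * y$j * y$k + y$i * v$j * y$k + y$i * y$j * v$k))"
      unfolding Hc by (rule frechet_derivative_at[symmetric, OF cubic_deriv])
    hence "grad H y = (\<chi> l. q l y)" unfolding grad_def q_def by simp
    also have "\<dots> = (\<Sum>l\<in>UNIV. q l y *\<^sub>R axis l 1)"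
      by (simp add: vec_eq_iff axis_def sum_component if_distrib cong: if_cong)
    finally show ?thesis .
  qed
  have vp: "real_polynomial_function (\<lambda>y::vec6. y$j)" for j
    by (rule real_polynomial_function.intros(1)[OF bounded_linear_vec_nth])
  have qp: "real_polynomial_function (q l)" for l
    unfolding q_def
    by (intro real_polynomial_function_sum finite_UNIV real_polynomial_function.intros(3)
        real_polynomial_function.intros(4) real_polynomial_function.intros(2) vp; simp)
  have "polynomial_function (\<lambda>y. \<Sum>l\<in>UNIV. q l y *\<^sub>R (axis l 1::vec6))"
    apply (intro polynomial_function_sum finite_UNIV polynomial_function_mult polynomial_function_const)
    using qp real_polynomial_function_eq by auto
  hence "(\<lambda>y. \<Sum>l\<in>UNIV. q l y *\<^sub>R (axis l 1::vec6)) differentiable at x"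
    by (rule differentiable_at_polynomial_function)
  moreover have "grad H = (\<lambda>y. \<Sum>l\<in>UNIV. q l y *\<^sub>R (axis l 1::vec6))" using g by auto
  ultimately show ?thesis by simp
qed

lemma jac_lin:
  fixes f h :: "vec6 \<Rightarrow> vec6" and P :: mat6
  assumes d: "f differentiable at x" and h: "\<forall>y. h y = P *v f y"
  shows "jacobian h (at x) = P ** jacobian f (at x)"
proof -
  let ?D = "frechet_derivative f (at x)"
  have D: "(f has_derivative ?D) (at x)" using d[unfolded frechet_derivative_works] .
  have hh: "h = (\<lambda>y. P *v f y)" using h by auto
  have "(h has_derivative (\<lambda>v. P *v ?D v)) (at x)"
    unfolding hh by (rule bounded_linear.has_derivative[OF matrix_vector_mul_bounded_linear D])
  hence "frechet_derivative h (at x) = (\<lambda>v. P *v ?D v)"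
    by (rule frechet_derivative_at[symmetric])
  hence e: "frechet_derivative h (at x) = (\<lambda>v. P *v v) o ?D"
    by (simp add: o_def)
  have l: "linear ?D" using D by (rule has_derivative_linear)
  show ?thesis unfolding jacobian_def e
    using matrix_compose[OF l matrix_vector_mul_linear] by simp
qed

lemma jac_nondiff:
  fixes f h :: "vec6 \<Rightarrow> vec6" and P Q :: mat6
  assumes nd: "\<not> f differentiable at x" and h: "\<forall>y. h y = P *v f y"
    and f: "\<forall>y. f y = Q *v h y"
  shows "jacobian h (at x) = jacobian f (at x)"
proof -
  have nh: "\<not> (h has_derivative D) (at x)" for D
  proof
    assume D: "(h has_derivative D) (at x)"
    have ff: "f = (\<lambda>y. Q *v h y)" using f by auto
    have "(f has_derivative (\<lambda>v. Q *v D v)) (at x)"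
      unfolding ff by (rule bounded_linear.has_derivative[OF matrix_vector_mul_bounded_linear D])
    hence "f differentiable at x" unfolding differentiable_def by blast
    thus False using nd by simp
  qed
  have nf: "\<not> (f has_derivative D) (at x)" for D
    using nd unfolding differentiable_def by simp
  have "(\<lambda>D. (h has_derivative D) (at x)) = (\<lambda>D. (f has_derivative D) (at x))"
    using nh nf by simp
  thus ?thesis unfolding jacobian_def frechet_derivative_def by simp
qed

lemma madd_r: "((B + C) ** (A::real^'n^'m)) = B ** A + C ** (A::real^_^_)"
  by (vector matrix_matrix_mult_def sum.distrib[symmetric] field_simps)
lemma tadd: "transpose (A + B) = transpose A + transpose (B::real^'n^'m)"
  by (vector transpose_def)
lemma mat_sc: "(mat a :: real^'n^'n) = a *\<^sub>R mat 1"
  by (vector mat_def)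
lemma matl: "mat a ** (M::real^'n^'m) = a *\<^sub>R M"
  by (metis matrix_mul_lid scalar_matrix_assoc mat_sc)
lemma matr: "(M::real^'n^'m) ** mat a = a *\<^sub>R M"
  by (metis matrix_mul_rid matrix_scalar_ac mat_sc)

lemma UNIV_6: "(UNIV::6 set) = {1,2,3,4,5,6}"
proof -
  have c: "card {1,2,3,4,5,6::6} = 6" by simp
  have "card (UNIV::6 set) = 6" by simp
  thus ?thesis
    by (metis c card_subset_eq finite_class.finite_UNIV subset_UNIV)
qed
lemma sum_6: "sum f (UNIV::6 set) = f 1 + f 2 + f 3 + f 4 + f 5 + f 6"
  unfolding UNIV_6 by (simp add: add.assoc)
lemma JJ: "Jmat ** Jmat = - mat 1"
proof -
  have "(Jmat ** Jmat) $ i $ j = (- mat 1 :: real^6^6) $ i $ j" for i j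
  proof -
    have i: "i \<in> {1,2,3,4,5,6}" and j: "j \<in> {1,2,3,4,5,6}" using UNIV_6 by auto
    show ?thesis
      using i j unfolding matrix_matrix_mult_def mat_def
      apply (simp only: vec_lambda_beta insert_iff empty_iff simp_thms sum_6)
      apply (elim disjE)
      apply (simp_all add: Jmat_def)
      done
  qed
  thus ?thesis by (simp add: vec_eq_iff)
qed

theorem mainTheorem4:
  fixes A B :: mat6 and H0 H1 H2 :: "vec6 \<Rightarrow> real"
    and \<alpha> \<beta> \<gamma> :: real and f0 g :: "vec6 \<Rightarrow> vec6"
  assumes skew_ham: "transpose A ** Jmat = Jmat ** A"
    and H0: "hom_cubic H0"
    and H0_comm: "\<forall>x. A ** hess H0 x = hess H0 x ** transpose A"
    and H1: "hom_cubic H1" and H1_grad: "\<forall>x. grad H1 x = A *v grad H0 x"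
    and H2: "hom_cubic H2" and H2_grad: "\<forall>x. grad H2 x = A *v grad H1 x"
    and f0_def: "\<forall>x. f0 x = Jmat *v grad H0 x"
    and B_def: "B = mat \<alpha> + \<beta> *\<^sub>R A + \<gamma> *\<^sub>R (A ** A)"
    and B_inv: "B ** B = mat 1"
    and g_def: "\<forall>x. g x = transpose B *v f0 x"
  shows "\<forall>x. jacobian g (at x) *v g x = jacobian f0 (at x) *v f0 x
           \<and> jacobian g (at x) ** jacobian g (at x) = jacobian f0 (at x) ** jacobian f0 (at x)"
proof
  fix x
  let ?T = "transpose B"
  have TT: "?T ** ?T = mat 1" using B_inv by (metis matrix_transpose_mul transpose_mat)
  have f0g: "\<forall>y. f0 y = ?T *v g y" using g_def TT by (simp add: matrix_vector_mul_assoc)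
  have TJ: "?T ** Jmat = Jmat ** B"
  proof -
    have "?T = mat \<alpha> + \<beta> *\<^sub>R transpose A + \<gamma> *\<^sub>R (transpose A ** transpose A)"
      unfolding B_def by (simp add: tadd transpose_scalar matrix_transpose_mul)
    hence "?T ** Jmat = \<alpha> *\<^sub>R Jmat + \<beta> *\<^sub>R (transpose A ** Jmat)
        + \<gamma> *\<^sub>R (transpose A ** (transpose A ** Jmat))"
      by (simp add: madd_r scalar_matrix_assoc matrix_mul_assoc matl)
    also have "\<dots> = \<alpha> *\<^sub>R Jmat + \<beta> *\<^sub>R (Jmat ** A) + \<gamma> *\<^sub>R (Jmat ** (A ** A))"
      using skew_ham by (simp add: matrix_mul_assoc)
    also have "\<dots> = Jmat ** B"
      unfolding B_def by (simp add: matrix_add_ldistrib matr matrix_scalar_ac scalar_matrix_assoc[symmetric])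
    finally show ?thesis .
  qed
  let ?M = "hess H0 x"
  have BM: "B ** ?M = ?M ** ?T"
  proof -
    have c: "A ** ?M = ?M ** transpose A" using H0_comm by blast
    have "B ** ?M = \<alpha> *\<^sub>R ?M + \<beta> *\<^sub>R (A ** ?M) + \<gamma> *\<^sub>R (A ** (A ** ?M))"
      unfolding B_def by (simp add: madd_r scalar_matrix_assoc matrix_mul_assoc matl)
    also have "\<dots> = \<alpha> *\<^sub>R ?M + \<beta> *\<^sub>R (?M ** transpose A) + \<gamma> *\<^sub>R ((?M ** transpose A) ** transpose A)"
      using c by (metis matrix_mul_assoc)
    also have "\<dots> = ?M ** ?T"
      unfolding B_def by (simp add: tadd transpose_scalar matrix_transpose_mul
          matrix_add_ldistrib matrix_scalar_ac matrix_mul_assoc matr scalar_matrix_assoc[symmetric])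
    finally show ?thesis .
  qed
  show "jacobian g (at x) *v g x = jacobian f0 (at x) *v f0 x
           \<and> jacobian g (at x) ** jacobian g (at x) = jacobian f0 (at x) ** jacobian f0 (at x)"
  proof -
    have gd: "grad H0 differentiable at x" by (rule grad_diff[OF H0])
    have True: "f0 differentiable at x"
    proof -
      obtain D where D: "(grad H0 has_derivative D) (at x)" using gd differentiable_def by blast
      have "((\<lambda>y. Jmat *v grad H0 y) has_derivative (\<lambda>v. Jmat *v D v)) (at x)"
        by (rule bounded_linear.has_derivative[OF matrix_vector_mul_bounded_linear D])
      hence "(\<lambda>y. Jmat *v grad H0 y) differentiable at x" unfolding differentiable_def by blast
      moreover have "f0 = (\<lambda>y. Jmat *v grad H0 y)" using f0_def by auto
      ultimately show ?thesis by simp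
    qed
    from gd have F: "jacobian f0 (at x) = Jmat ** ?M"
      unfolding hess_def using jac_lin f0_def by blast
    have G: "jacobian g (at x) = ?T ** (Jmat ** ?M)"
      using jac_lin[OF True g_def] F by simp
    have key: "?T ** (Jmat ** ?M) ** ?T = Jmat ** ?M"
    proof -
      have "?T ** (Jmat ** ?M) ** ?T = Jmat ** (B ** ?M) ** ?T"
        using TJ by (simp add: matrix_mul_assoc)
      also have "\<dots> = Jmat ** ?M ** (?T ** ?T)" using BM by (simp add: matrix_mul_assoc)
      also have "\<dots> = Jmat ** ?M" using TT by simp
      finally show ?thesis .
    qed
    have "jacobian g (at x) *v g x = (?T ** (Jmat ** ?M) ** ?T) *v f0 x"
      using G g_def by (simp add: matrix_vector_mul_assoc)
    moreover have "jacobian g (at x) ** jacobian g (at x) = (?T ** (Jmat ** ?M) ** ?T) ** (Jmat ** ?M)"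
      using G by (simp add: matrix_mul_assoc)
    ultimately show ?thesis using key F by simp
  qed
qed

end
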